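(* Let $A_1,\ldots,A_m\in\mathbb{R}^{n\times n}$ with $\mathrm{JSR}(\{A_i\}_{i=1}^m)<1$, and let $c:\mathbb{R}^n\to\mathbb{R}_{\geq0}$ be Lipschitz continuous (with respect to the Euclidean norm) on a neighborhood $X\subseteq\mathbb{R}^n$ of the origin, with Lipschitz constant $L$. Let $\rho<1$ and let $\lVert\cdot\rVert_*$ be a norm on $\mathbb{R}^n$ such that for every solution $\xi$ of $\xi(t+1)=A_{\sigma(t)}\xi(t)$ (for any switching signal $\sigma$) and all $t\in\mathbb{N}$, $\lVert\xi(t)\rVert_*\leq\rho^t\lVert\xi(0)\rVert_*$. Let $\eta>0$ be such that $B_*(\eta):=\{x\in\mathbb{R}^n:\lVert x\rVert_*\leq\eta\}\subseteq X$. Then the optimal value function $J^\star$ and the worst-case value function $J^\circ$ are Lipschitz continuous on $B_*(\eta)$ (with respect to the Euclidean norm), with Lipschitz constant $M=\kappa(\lVert\cdot\rVert_* )L/(1-\rho)$.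
   Context: A discrete-time switched linear system $\{A_i\}_{i=1}^m$ is $\xi(t+1)=A_{\sigma(t)}\xi(t)$, $t\in\mathbb{N}$, with switching signal $\sigma:\mathbb{N}\to\{1,\ldots,m\}$; $\xi(t,x,\sigma)$ denotes the solution at time $t$ with $\xi(0)=x$. The joint spectral radius $\mathrm{JSR}(\{A_i\})$ is the infimum of $r\geq0$ such that there is $C\geq0$ with $\lVert\xi(t)\rVert\leq Cr^t\lVert\xi(0)\rVert$ for all solutions and all $t$. Given a cost $c:\mathbb{R}^n\to\mathbb{R}_{\geq0}$, $J(x,\sigma)=\sum_{t=0}^\infty c(\xi(t,x,\sigma))$, $J^\star(x)=\inf_\sigma J(x,\sigma)$ (optimal value function) and $J^\circ(x)=\sup_\sigma J(x,\sigma)$ (worst-case value function). $\lVert\cdot\rVert$ is the Euclidean norm, and for a norm $\lVert\cdot\rVert'$ its eccentricity is $\kappa(\lVert\cdot\rVert')=\max_{\lVert x\rVert=1}\lVert x\rVert'/\min_{\lVert x\rVert=1}\lVert x\rVert'$. *)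

theory Defs
  imports "HOL-Analysis.Analysis"
begin

definition signals :: "nat \<Rightarrow> (nat \<Rightarrow> nat) set" where
  "signals m = {\<sigma>. \<forall>t. \<sigma> t \<in> {1..m}}"

fun sol :: "(nat \<Rightarrow> real^'n^'n) \<Rightarrow> (nat \<Rightarrow> nat) \<Rightarrow> real^'n \<Rightarrow> nat \<Rightarrow> real^'n" where
  "sol A \<sigma> x 0 = x"
| "sol A \<sigma> x (Suc t) = A (\<sigma> t) *v sol A \<sigma> x t"

definition JSR :: "(nat \<Rightarrow> real^'n^'n) \<Rightarrow> nat \<Rightarrow> real" where
  "JSR A m = Inf {r. r \<ge> 0 \<and> (\<exists>C\<ge>0. \<forall>\<sigma>\<in>signals m. \<forall>x t.
       norm (sol A \<sigma> x t) \<le> C * r ^ t * norm x)}"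

definition Jcost :: "(real^'n \<Rightarrow> real) \<Rightarrow> (nat \<Rightarrow> real^'n^'n) \<Rightarrow> (nat \<Rightarrow> nat) \<Rightarrow> real^'n \<Rightarrow> real" where
  "Jcost c A \<sigma> x = (\<Sum>t. c (sol A \<sigma> x t))"

definition Jopt :: "(real^'n \<Rightarrow> real) \<Rightarrow> (nat \<Rightarrow> real^'n^'n) \<Rightarrow> nat \<Rightarrow> real^'n \<Rightarrow> real" where
  "Jopt c A m x = (INF \<sigma>\<in>signals m. Jcost c A \<sigma> x)"

definition Jworst :: "(real^'n \<Rightarrow> real) \<Rightarrow> (nat \<Rightarrow> real^'n^'n) \<Rightarrow> nat \<Rightarrow> real^'n \<Rightarrow> real" where
  "Jworst c A m x = (SUP \<sigma>\<in>signals m. Jcost c A \<sigma> x)"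

definition is_norm :: "(real^'n \<Rightarrow> real) \<Rightarrow> bool" where
  "is_norm N \<longleftrightarrow> (\<forall>x. N x \<ge> 0) \<and> (\<forall>x. N x = 0 \<longleftrightarrow> x = 0)
     \<and> (\<forall>a x. N (a *\<^sub>R x) = \<bar>a\<bar> * N x) \<and> (\<forall>x y. N (x + y) \<le> N x + N y)"

definition eccentricity :: "(real^'n \<Rightarrow> real) \<Rightarrow> real" where
  "eccentricity N = (SUP x\<in>sphere 0 1. N x) / (INF x\<in>sphere 0 1. N x)"

end

theory Submission
  imports Defs
begin

lemma sol_diff: "sol A \<sigma> (x - y) t = sol A \<sigma> x t - sol A \<sigma> y t"
  by (induction t) (simp_all add: matrix_vector_mult_diff_distrib)

lemma sol_zero: "sol A \<sigma> 0 t = 0"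
  by (induction t) simp_all

lemma norm_sum_le:
  assumes "is_norm N" "finite S"
  shows "N (\<Sum>i\<in>S. f i) \<le> (\<Sum>i\<in>S. N (f i))"
  using assms(2)
proof (induction S rule: finite_induct)
  case empty
  have "N 0 = 0" using assms(1) unfolding is_norm_def by blast
  then show ?case by simp
next
  case (insert x F)
  have "N (f x + sum f F) \<le> N (f x) + N (sum f F)" using assms(1) unfolding is_norm_def by blast
  then show ?case using insert by simp
qed

lemma norm_upper:
  assumes "is_norm N"
  shows "\<exists>B\<ge>0. \<forall>x::real^'n. N x \<le> B * norm x"
proof -
  define B where "B = (\<Sum>b\<in>(Basis::(real^'n) set). N b)"
  have nn: "\<And>x. N x \<ge> 0" using assms unfolding is_norm_def by blast
  have "\<forall>x::real^'n. N x \<le> B * norm x"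
  proof
    fix x :: "real^'n"
    have "N x = N (\<Sum>b\<in>Basis. (x \<bullet> b) *\<^sub>R b)" by (simp add: euclidean_representation)
    also have "\<dots> \<le> (\<Sum>b\<in>Basis. N ((x \<bullet> b) *\<^sub>R b))" by (rule norm_sum_le[OF assms]) simp
    also have "\<dots> = (\<Sum>b\<in>Basis. \<bar>x \<bullet> b\<bar> * N b)" using assms unfolding is_norm_def by simp
    also have "\<dots> \<le> (\<Sum>b\<in>Basis. norm x * N b)"
      by (rule sum_mono) (simp add: Basis_le_norm mult_right_mono nn)
    also have "\<dots> = B * norm x" by (simp add: B_def sum_distrib_left mult.commute)
    finally show "N x \<le> B * norm x" .
  qed
  moreover have "B \<ge> 0" unfolding B_def by (simp add: sum_nonneg nn)
  ultimately show ?thesis by blast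
qed

lemma norm_diff_le:
  assumes "is_norm N"
  shows "\<bar>N x - N y\<bar> \<le> N (x - y)"
proof -
  have t: "\<And>a b. N (a + b) \<le> N a + N b" using assms unfolding is_norm_def by blast
  have s: "\<And>a. N (- a) = N a" using assms unfolding is_norm_def
    by (metis abs_minus_cancel abs_one mult_cancel_right1 scaleR_minus1_left)
  have "N x \<le> N y + N (x - y)" using t[of y "x - y"] by simp
  moreover have "N y \<le> N x + N (x - y)" using t[of x "y - x"] s[of "x - y"] by simp
  ultimately show ?thesis by linarith
qed

lemma norm_cont:
  assumes "is_norm N"
  shows "continuous_on S (N::real^'n \<Rightarrow> real)"
proof -
  obtain B where B: "B \<ge> 0" "\<forall>x::real^'n. N x \<le> B * norm x" using norm_upper[OF assms] by blast
  have "B-lipschitz_on S N"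
  proof (rule lipschitz_onI)
    fix x y assume "x \<in> S" "y \<in> S"
    have "\<bar>N x - N y\<bar> \<le> N (x - y)" by (rule norm_diff_le[OF assms])
    also have "\<dots> \<le> B * norm (x - y)" using B by blast
    finally show "dist (N x) (N y) \<le> B * dist x y" by (simp add: dist_real_def dist_norm)
  qed (use B in auto)
  then show ?thesis by (rule lipschitz_on_continuous_on)
qed


lemma norm_equiv:
  assumes "is_norm N"
  shows "0 < (INF x\<in>sphere (0::real^'n) 1. N x)
    \<and> (\<forall>z::real^'n. (INF x\<in>sphere 0 1. N x) * norm z \<le> N z \<and> N z \<le> (SUP x\<in>sphere 0 1. N x) * norm z)"
proof -
  have nn: "\<And>x. N x \<ge> 0" and z0: "\<And>x. N x = 0 \<longleftrightarrow> x = 0"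
    and hom: "\<And>a x. N (a *\<^sub>R x) = \<bar>a\<bar> * N x" using assms unfolding is_norm_def by blast+
  obtain B where B: "B \<ge> 0" "\<forall>x::real^'n. N x \<le> B * norm x" using norm_upper[OF assms] by blast
  have ne: "sphere (0::real^'n) 1 \<noteq> {}"
    by (simp add: sphere_eq_empty)
  obtain x0 where x0: "x0 \<in> sphere (0::real^'n) 1" "\<forall>y\<in>sphere 0 1. N x0 \<le> N y"
    using continuous_attains_inf[OF compact_sphere ne norm_cont[OF assms]] by blast
  have bb: "bdd_below (N ` sphere 0 1)" using nn by (meson bdd_below.I2)
  have ba: "bdd_above (N ` sphere (0::real^'n) 1)" using B by (intro bdd_aboveI2[where M=B]) (metis mem_sphere_0 mult.right_neutral)
  have inf: "(INF x\<in>sphere 0 1. N x) = N x0"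
    by (rule antisym) (use x0 in \<open>auto intro!: cINF_lower[OF bb] cINF_greatest ne\<close>)
  have x00: "x0 \<noteq> 0" using x0 by auto
  have pos: "0 < N x0" using nn[of x0] z0[of x0] x00 by linarith
  have "\<forall>z::real^'n. (INF x\<in>sphere 0 1. N x) * norm z \<le> N z \<and> N z \<le> (SUP x\<in>sphere 0 1. N x) * norm z"
  proof
    fix z :: "real^'n"
    show "(INF x\<in>sphere 0 1. N x) * norm z \<le> N z \<and> N z \<le> (SUP x\<in>sphere 0 1. N x) * norm z"
    proof (cases "z = 0")
      case True then show ?thesis using z0[of 0] by simp
    next
      case False
      define w where "w = (1 / norm z) *\<^sub>R z"
      have w: "w \<in> sphere 0 1" using False by (simp add: w_def)
      have zw: "z = norm z *\<^sub>R w" using False by (simp add: w_def)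
      have Nz: "N z = norm z * N w" using hom[of "norm z" w] zw by simp
      have "(INF x\<in>sphere 0 1. N x) \<le> N w" by (rule cINF_lower[OF bb w])
      moreover have "N w \<le> (SUP x\<in>sphere 0 1. N x)" by (rule cSUP_upper[OF w ba])
      ultimately show ?thesis using Nz by (metis mult.commute mult_right_mono norm_ge_zero)
    qed
  qed
  then show ?thesis using inf pos by simp
qed


lemma pointwise_bound:
  fixes A :: "nat \<Rightarrow> real^'n^'n" and c :: "real^'n \<Rightarrow> real"
  assumes N: "is_norm N" and lip: "L-lipschitz_on X c" and sub: "{x. N x \<le> \<eta>} \<subseteq> X"
    and r0: "0 \<le> \<rho>" and r1: "\<rho> < 1"
    and contr: "\<forall>x t. N (sol A \<sigma> x t) \<le> \<rho> ^ t * N x"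
    and x: "N x \<le> \<eta>" and y: "N y \<le> \<eta>"
  shows "\<bar>c (sol A \<sigma> x t) - c (sol A \<sigma> y t)\<bar>
     \<le> ((SUP x\<in>sphere (0::real^'n) 1. N x) / (INF x\<in>sphere (0::real^'n) 1. N x)) * L * \<rho> ^ t * norm (x - y)"
proof -
  define a where "a = (INF x\<in>sphere (0::real^'n) 1. N x)"
  define b where "b = (SUP x\<in>sphere (0::real^'n) 1. N x)"
  have a: "0 < a" and ab: "\<And>z::real^'n. a * norm z \<le> N z \<and> N z \<le> b * norm z"
    using norm_equiv[OF N] unfolding a_def b_def by blast+
  have nn: "\<And>x. N x \<ge> 0" using N unfolding is_norm_def by blast
  have L0: "L \<ge> 0" using lip by (simp add: lipschitz_on_def)
  have pt: "\<rho> ^ t \<le> 1" using r0 r1 by (simp add: power_le_one)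
  have pt0: "\<rho> ^ t \<ge> 0" using r0 by simp
  have inx: "sol A \<sigma> x t \<in> X"
  proof -
    have "N (sol A \<sigma> x t) \<le> \<rho> ^ t * N x" using contr by blast
    also have "\<dots> \<le> N x" using pt pt0 nn[of x] by (intro mult_left_le_one_le) auto
    finally show ?thesis using x sub by auto
  qed
  have iny: "sol A \<sigma> y t \<in> X"
  proof -
    have "N (sol A \<sigma> y t) \<le> \<rho> ^ t * N y" using contr by blast
    also have "\<dots> \<le> N y" using pt pt0 nn[of y] by (intro mult_left_le_one_le) auto
    finally show ?thesis using y sub by auto
  qed
  have "\<bar>c (sol A \<sigma> x t) - c (sol A \<sigma> y t)\<bar> \<le> L * norm (sol A \<sigma> x t - sol A \<sigma> y t)"
    using lipschitz_onD[OF lip inx iny] by (simp add: dist_real_def dist_norm)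
  also have "\<dots> = L * norm (sol A \<sigma> (x - y) t)" by (simp add: sol_diff)
  also have "\<dots> \<le> L * (\<rho> ^ t * (b / a) * norm (x - y))"
  proof (rule mult_left_mono[OF _ L0])
    have "a * norm (sol A \<sigma> (x - y) t) \<le> N (sol A \<sigma> (x - y) t)" using ab by blast
    also have "\<dots> \<le> \<rho> ^ t * N (x - y)" using contr by blast
    also have "\<dots> \<le> \<rho> ^ t * (b * norm (x - y))" using ab pt0 by (simp add: mult_left_mono)
    finally have "a * norm (sol A \<sigma> (x - y) t) \<le> \<rho> ^ t * (b * norm (x - y))" .
    then show "norm (sol A \<sigma> (x - y) t) \<le> \<rho> ^ t * (b / a) * norm (x - y)"
      using a by (simp add: field_simps)
  qed
  finally show ?thesis unfolding a_def[symmetric] b_def[symmetric] by (simp add: algebra_simps)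
qed

lemma Jcost_bound:
  fixes A :: "nat \<Rightarrow> real^'n^'n" and c :: "real^'n \<Rightarrow> real"
  assumes N: "is_norm N" and lip: "L-lipschitz_on X c" and sub: "{x. N x \<le> \<eta>} \<subseteq> X"
    and r0: "0 \<le> \<rho>" and r1: "\<rho> < 1" and c0: "c 0 = 0"
    and contr: "\<forall>x t. N (sol A \<sigma> x t) \<le> \<rho> ^ t * N x"
    and x: "N x \<le> \<eta>" and y: "N y \<le> \<eta>"
  shows "\<bar>Jcost c A \<sigma> x - Jcost c A \<sigma> y\<bar>
     \<le> ((SUP x\<in>sphere (0::real^'n) 1. N x) / (INF x\<in>sphere (0::real^'n) 1. N x)) * L / (1 - \<rho>) * norm (x - y)"
proof -
  define k where "k = ((SUP x\<in>sphere (0::real^'n) 1. N x) / (INF x\<in>sphere (0::real^'n) 1. N x))"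
  have nn: "\<And>x. N x \<ge> 0" and N0: "N 0 = 0" using N unfolding is_norm_def by blast+
  have z: "N 0 \<le> \<eta>" using N0 nn[of x] x by simp
  have geo: "summable (\<lambda>t. \<rho> ^ t)" using r0 r1 by (simp add: summable_geometric)
  have sm: "summable (\<lambda>t. c (sol A \<sigma> v t))" if v: "N v \<le> \<eta>" for v
  proof (rule summable_comparison_test'[where N=0])
    show "summable (\<lambda>t. k * L * norm (v - 0) * \<rho> ^ t)" by (intro summable_mult geo)
    fix t :: nat
    show "norm (c (sol A \<sigma> v t)) \<le> k * L * norm (v - 0) * \<rho> ^ t"
      using pointwise_bound[OF N lip sub r0 r1 contr v z, of t] c0
      by (simp add: sol_zero k_def mult_ac)
  qed
  have sx: "summable (\<lambda>t. c (sol A \<sigma> x t))" and sy: "summable (\<lambda>t. c (sol A \<sigma> y t))"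
    using sm x y by auto
  have sd: "summable (\<lambda>t. c (sol A \<sigma> x t) - c (sol A \<sigma> y t))" by (rule summable_diff[OF sx sy])
  have sg: "summable (\<lambda>t. k * L * norm (x - y) * \<rho> ^ t)" by (intro summable_mult geo)
  have sa: "summable (\<lambda>t. \<bar>c (sol A \<sigma> x t) - c (sol A \<sigma> y t)\<bar>)"
      by (rule summable_comparison_test'[OF sg, where N=0])
         (use pointwise_bound[OF N lip sub r0 r1 contr x y] in \<open>simp add: k_def mult_ac\<close>)
  have "\<bar>Jcost c A \<sigma> x - Jcost c A \<sigma> y\<bar> = \<bar>\<Sum>t. c (sol A \<sigma> x t) - c (sol A \<sigma> y t)\<bar>"
    unfolding Jcost_def using suminf_diff[OF sx sy] by simp
  also have "\<dots> \<le> (\<Sum>t. \<bar>c (sol A \<sigma> x t) - c (sol A \<sigma> y t)\<bar>)"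
    by (rule summable_rabs[OF sa])
  also have "\<dots> \<le> (\<Sum>t. k * L * norm (x - y) * \<rho> ^ t)"
  proof (rule suminf_le)
    show "summable (\<lambda>t. \<bar>c (sol A \<sigma> x t) - c (sol A \<sigma> y t)\<bar>)" by (rule sa)
    show "\<And>t. \<bar>c (sol A \<sigma> x t) - c (sol A \<sigma> y t)\<bar> \<le> k * L * norm (x - y) * \<rho> ^ t"
      using pointwise_bound[OF N lip sub r0 r1 contr x y] by (simp add: k_def mult_ac)
  qed (rule sg)
  also have "\<dots> = k * L * norm (x - y) * (1 / (1 - \<rho>))"
    using suminf_mult[OF geo, of "k * L * norm (x - y)"] suminf_geometric[of \<rho>] r0 r1 by simp
  also have "\<dots> = k * L / (1 - \<rho>) * norm (x - y)" by simp
  finally show ?thesis unfolding k_def .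
qed


lemma INF_diff_le:
  fixes f g :: "'a \<Rightarrow> real"
  assumes ne: "S \<noteq> {}" and bf: "bdd_below (f ` S)" and bg: "bdd_below (g ` S)"
    and d: "\<forall>s\<in>S. \<bar>f s - g s\<bar> \<le> D"
  shows "\<bar>(INF s\<in>S. f s) - (INF s\<in>S. g s)\<bar> \<le> D"
proof -
  have 1: "(INF s\<in>S. f s) - D \<le> (INF s\<in>S. g s)"
  proof -
    have "(INF s\<in>S. f s) \<le> D + (INF s\<in>S. g s)"
    proof -
      have "(INF s\<in>S. f s) - D \<le> g s" if "s \<in> S" for s
        using cINF_lower[OF bf that] d that by force
      then have "(INF s\<in>S. f s) - D \<le> (INF s\<in>S. g s)" by (intro cINF_greatest ne) auto
      then show ?thesis by simp
    qed
    then show ?thesis by simp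
  qed
  have 2: "(INF s\<in>S. g s) - D \<le> (INF s\<in>S. f s)"
  proof -
    have "(INF s\<in>S. g s) - D \<le> f s" if "s \<in> S" for s
      using cINF_lower[OF bg that] d that by force
    then show ?thesis by (intro cINF_greatest ne) auto
  qed
  show ?thesis using 1 2 by linarith
qed

lemma SUP_diff_le:
  fixes f g :: "'a \<Rightarrow> real"
  assumes ne: "S \<noteq> {}" and bf: "bdd_above (f ` S)" and bg: "bdd_above (g ` S)"
    and d: "\<forall>s\<in>S. \<bar>f s - g s\<bar> \<le> D"
  shows "\<bar>(SUP s\<in>S. f s) - (SUP s\<in>S. g s)\<bar> \<le> D"
proof -
  have 1: "(SUP s\<in>S. f s) - D \<le> (SUP s\<in>S. g s)"
  proof -
    have "f s \<le> (SUP s\<in>S. g s) + D" if "s \<in> S" for s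
      using cSUP_upper[OF that bg] d that by force
    then have "(SUP s\<in>S. f s) \<le> (SUP s\<in>S. g s) + D" by (intro cSUP_least ne) auto
    then show ?thesis by simp
  qed
  have 2: "(SUP s\<in>S. g s) - D \<le> (SUP s\<in>S. f s)"
  proof -
    have "g s \<le> (SUP s\<in>S. f s) + D" if "s \<in> S" for s
      using cSUP_upper[OF that bf] d that by force
    then have "(SUP s\<in>S. g s) \<le> (SUP s\<in>S. f s) + D" by (intro cSUP_least ne) auto
    then show ?thesis by simp
  qed
  show ?thesis using 1 2 by linarith
qed

theorem theorem2:
  fixes A :: "nat \<Rightarrow> real^'n^'n" and m :: nat
    and c :: "real^'n \<Rightarrow> real" and X :: "(real^'n) set" and L :: real
    and \<rho> :: real and N :: "real^'n \<Rightarrow> real" and \<eta> :: real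
  assumes m_pos: "m \<ge> 1"
    and jsr: "JSR A m < 1"
    and c_nonneg: "\<forall>x. c x \<ge> 0"
    and c_zero: "c 0 = 0"
    and X_nhd: "0 \<in> interior X"
    and c_lip: "L-lipschitz_on X c"
    and rho: "\<rho> < 1"
    and N_norm: "is_norm N"
    and contr: "\<forall>\<sigma>\<in>signals m. \<forall>x t. N (sol A \<sigma> x t) \<le> \<rho> ^ t * N x"
    and eta: "\<eta> > 0"
    and ball_sub: "{x. N x \<le> \<eta>} \<subseteq> X"
  shows "(eccentricity N * L / (1 - \<rho>))-lipschitz_on {x. N x \<le> \<eta>} (Jopt c A m)
       \<and> (eccentricity N * L / (1 - \<rho>))-lipschitz_on {x. N x \<le> \<eta>} (Jworst c A m)"
proof -
  define M where "M = eccentricity N * L / (1 - \<rho>)"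
  have nn: "\<And>x. N x \<ge> 0" and z0: "\<And>x. N x = 0 \<longleftrightarrow> x = 0"
    using N_norm unfolding is_norm_def by blast+
  have sig1: "(\<lambda>_. 1) \<in> signals m" using m_pos by (simp add: signals_def)
  then have ne: "signals m \<noteq> {}" by blast
  obtain e :: "real^'n" where e: "e \<in> Basis" using nonempty_Basis by blast
  have e0: "e \<noteq> 0" using e by auto
  have Ne: "N e > 0" using nn[of e] z0[of e] e0 by linarith
  have r0: "0 \<le> \<rho>"
  proof -
    have "N (sol A (\<lambda>_. 1) e 1) \<le> \<rho> ^ 1 * N e" using contr sig1 by blast
    then have "0 \<le> \<rho> * N e" using nn[of "sol A (\<lambda>_. 1) e 1"] by simp
    then show ?thesis using Ne by (simp add: zero_le_mult_iff)
  qed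
  have L0: "L \<ge> 0" using c_lip by (simp add: lipschitz_on_def)
  have ecc: "eccentricity N = (SUP x\<in>sphere (0::real^'n) 1. N x) / (INF x\<in>sphere (0::real^'n) 1. N x)"
    by (simp add: eccentricity_def)
  have ecc0: "eccentricity N \<ge> 0"
  proof -
    have a: "0 < (INF x\<in>sphere (0::real^'n) 1. N x)"
      and ab: "\<And>z::real^'n. (INF x\<in>sphere 0 1. N x) * norm z \<le> N z \<and> N z \<le> (SUP x\<in>sphere 0 1. N x) * norm z"
      using norm_equiv[OF N_norm] by blast+
    have "(INF x\<in>sphere (0::real^'n) 1. N x) * norm e \<le> (SUP x\<in>sphere (0::real^'n) 1. N x) * norm e"
      using ab[of e] by linarith
    then have "(INF x\<in>sphere (0::real^'n) 1. N x) \<le> (SUP x\<in>sphere (0::real^'n) 1. N x)"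
      using e0 by (simp add: mult_le_cancel_right)
    then have "0 \<le> (SUP x\<in>sphere (0::real^'n) 1. N x)" using a by linarith
    then show ?thesis unfolding ecc using a by simp
  qed
  have M0: "M \<ge> 0" unfolding M_def using ecc0 L0 rho by simp
  have Jb: "\<bar>Jcost c A \<sigma> x - Jcost c A \<sigma> y\<bar> \<le> M * norm (x - y)"
    if s: "\<sigma> \<in> signals m" and x: "N x \<le> \<eta>" and y: "N y \<le> \<eta>" for \<sigma> x y
  proof -
    have c': "\<forall>x t. N (sol A \<sigma> x t) \<le> \<rho> ^ t * N x" using contr s by blast
    show ?thesis unfolding M_def ecc by (rule Jcost_bound[OF N_norm c_lip ball_sub r0 rho c_zero c' x y])
  qed
  have J0: "Jcost c A \<sigma> 0 = 0" for \<sigma> by (simp add: Jcost_def sol_zero c_zero)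
  have z: "N 0 \<le> \<eta>" using z0[of 0] eta by simp
  have bnd: "\<bar>Jcost c A \<sigma> x\<bar> \<le> M * norm x" if s: "\<sigma> \<in> signals m" and x: "N x \<le> \<eta>" for \<sigma> x
    using Jb[OF s x z] J0 by simp
  have bb: "bdd_below ((\<lambda>\<sigma>. Jcost c A \<sigma> x) ` signals m)" if x: "N x \<le> \<eta>" for x
  proof (intro bdd_belowI2[where m="- M * norm x"])
    fix \<sigma> assume "\<sigma> \<in> signals m"
    then show "- M * norm x \<le> Jcost c A \<sigma> x" using bnd[OF _ x, of \<sigma>] by (simp add: abs_le_iff)
  qed
  have ba: "bdd_above ((\<lambda>\<sigma>. Jcost c A \<sigma> x) ` signals m)" if x: "N x \<le> \<eta>" for x
  proof (intro bdd_aboveI2[where M="M * norm x"])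
    fix \<sigma> assume "\<sigma> \<in> signals m"
    then show "Jcost c A \<sigma> x \<le> M * norm x" using bnd[OF _ x, of \<sigma>] by (simp add: abs_le_iff)
  qed
  have "M-lipschitz_on {x. N x \<le> \<eta>} (Jopt c A m)"
  proof (rule lipschitz_onI)
    fix x y assume x: "x \<in> {x. N x \<le> \<eta>}" and y: "y \<in> {x. N x \<le> \<eta>}"
    show "dist (Jopt c A m x) (Jopt c A m y) \<le> M * dist x y"
    proof -
      have "\<forall>s\<in>signals m. \<bar>Jcost c A s x - Jcost c A s y\<bar> \<le> M * norm (x - y)"
        using Jb x y by simp
      then have "\<bar>(INF s\<in>signals m. Jcost c A s x) - (INF s\<in>signals m. Jcost c A s y)\<bar> \<le> M * norm (x - y)"
        using INF_diff_le[OF ne bb[of x] bb[of y]] x y by simp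
      then show ?thesis by (simp add: Jopt_def dist_real_def dist_norm)
    qed
  qed (rule M0)
  moreover have "M-lipschitz_on {x. N x \<le> \<eta>} (Jworst c A m)"
  proof (rule lipschitz_onI)
    fix x y assume x: "x \<in> {x. N x \<le> \<eta>}" and y: "y \<in> {x. N x \<le> \<eta>}"
    show "dist (Jworst c A m x) (Jworst c A m y) \<le> M * dist x y"
    proof -
      have "\<forall>s\<in>signals m. \<bar>Jcost c A s x - Jcost c A s y\<bar> \<le> M * norm (x - y)"
        using Jb x y by simp
      then have "\<bar>(SUP s\<in>signals m. Jcost c A s x) - (SUP s\<in>signals m. Jcost c A s y)\<bar> \<le> M * norm (x - y)"
        using SUP_diff_le[OF ne ba[of x] ba[of y]] x y by simp
      then show ?thesis by (simp add: Jworst_def dist_real_def dist_norm)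
    qed
  qed (rule M0)
  ultimately show ?thesis unfolding M_def by blast
qed

end
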